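(* For $s\geq0$ let $(G_s,\varphi)$ be as in the context, with induced metric having scalar curvature $\mathrm{scal}_s$ and Ricci operator $\mathrm{Ric}_s$, and let $F(s)=\mathrm{scal}_s^2/|\mathrm{Ric}_s|^2$. Then $F(s)=\dfrac{(75+64s^2)^2}{1725+4224s^2+4096s^4}$, and: (a) on $[0,\infty)$, $F$ attains its maximum at $s=0$, with $F(0)=\tfrac{75}{23}>3$; (b) at $s=\tfrac{\sqrt{15}}8$ (the value for which $(G_s,\varphi)$ is a steady Laplacian soliton), $F(s)=\tfrac{135}{49}$; (c) at $s=\tfrac58$ (the value for which $(G_s,\langle\cdot,\cdot\rangle)$ is an expanding Ricci soliton), $F(s)=\tfrac52$.
   Context: For $s\in\mathbb R$, $\mathfrak g_s$ is the real Lie algebra with basis $\{e_1,\dots,e_7\}$ whose only nonzero brackets of basis elements (up to antisymmetry) are $[e_1,e_3]=-e_6$, $[e_1,e_4]=-e_5$, $[e_2,e_3]=-e_5$, $[e_7,e_i]=(A_s)_{ii}e_i$ ($i=1,\dots,6$), with $A_s=\mathrm{Diag}(\tfrac38+s,-\tfrac18+s,\tfrac38-s,-\tfrac18-s,\tfrac14,\tfrac34)$; $G_s$ is the simply connected Lie group with Lie algebra $\mathfrak g_s$, with left-invariant $G_2$-structure $\varphi=e^{127}+e^{347}+e^{567}+e^{135}-e^{146}-e^{236}-e^{245}$ ($\{e^i\}$ dual basis), whose induced left-invariant metric $\langle\cdot,\cdot\rangle$ makes $\{e_i\}$ orthonormal. $|\mathrm{Ric}_s|^2=\mathrm{tr}(\mathrm{Ric}_s^2)$.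 *)

theory Defs
  imports Complex_Main
begin

text \<open>Basis index set {1..7}. Vectors of the Lie algebra g_s are identified with
  coefficient functions w.r.t. the orthonormal basis e_1,...,e_7.\<close>

definition Adiag :: "real \<Rightarrow> nat \<Rightarrow> real" where
  "Adiag s i = (if i = 1 then 3/8 + s else if i = 2 then -1/8 + s
     else if i = 3 then 3/8 - s else if i = 4 then -1/8 - s
     else if i = 5 then 1/4 else if i = 6 then 3/4 else 0)"

text \<open>Structure constants: brk s i j k = <[e_i,e_j], e_k>.\<close>
definition brk :: "real \<Rightarrow> nat \<Rightarrow> nat \<Rightarrow> nat \<Rightarrow> real" where
  "brk s i j k =
    (if (i,j,k) = (1,3,6) then -1 else if (i,j,k) = (3,1,6) then 1
     else if (i,j,k) = (1,4,5) then -1 else if (i,j,k) = (4,1,5) then 1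
     else if (i,j,k) = (2,3,5) then -1 else if (i,j,k) = (3,2,5) then 1
     else if i = 7 \<and> 1 \<le> j \<and> j \<le> 6 \<and> k = j then Adiag s j
     else if j = 7 \<and> 1 \<le> i \<and> i \<le> 6 \<and> k = i then - Adiag s i
     else 0)"

text \<open>Levi-Civita connection of the left-invariant metric (Koszul formula):
  conn s i j k = <nabla_{e_i} e_j, e_k>.\<close>
definition conn :: "real \<Rightarrow> nat \<Rightarrow> nat \<Rightarrow> nat \<Rightarrow> real" where
  "conn s i j k = (brk s i j k - brk s j k i + brk s k i j) / 2"

text \<open>Curvature R(X,Y) = nabla_X nabla_Y - nabla_Y nabla_X - nabla_[X,Y]:
  curv s a b c d = <R(e_a,e_b) e_c, e_d>.\<close>
definition curv :: "real \<Rightarrow> nat \<Rightarrow> nat \<Rightarrow> nat \<Rightarrow> nat \<Rightarrow> real" where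
  "curv s a b c d =
     (\<Sum>k\<in>{1..7}. conn s b c k * conn s a k d)
   - (\<Sum>k\<in>{1..7}. conn s a c k * conn s b k d)
   - (\<Sum>k\<in>{1..7}. brk s a b k * conn s k c d)"

text \<open>Ricci tensor Ric(Y,Z) = tr(X \<mapsto> R(X,Y)Z); in the orthonormal basis this is also
  the matrix of the Ricci operator.\<close>
definition ric :: "real \<Rightarrow> nat \<Rightarrow> nat \<Rightarrow> real" where
  "ric s b c = (\<Sum>a\<in>{1..7}. curv s a b c a)"

definition scal :: "real \<Rightarrow> real" where
  "scal s = (\<Sum>i\<in>{1..7}. ric s i i)"

definition ric_norm2 :: "real \<Rightarrow> real" where
  "ric_norm2 s = (\<Sum>i\<in>{1..7}. \<Sum>j\<in>{1..7}. ric s i j * ric s j i)"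

definition F :: "real \<Rightarrow> real" where
  "F s = (scal s)^2 / ric_norm2 s"

end

theory Submission
  imports Defs
begin

lemma brkT:
 "brk s 1 1 1 = (0)"
 "brk s 1 1 2 = (0)"
 "brk s 1 1 3 = (0)"
 "brk s 1 1 4 = (0)"
 "brk s 1 1 5 = (0)"
 "brk s 1 1 6 = (0)"
 "brk s 1 1 7 = (0)"
 "brk s 1 2 1 = (0)"
 "brk s 1 2 2 = (0)"
 "brk s 1 2 3 = (0)"
 "brk s 1 2 4 = (0)"
 "brk s 1 2 5 = (0)"
 "brk s 1 2 6 = (0)"
 "brk s 1 2 7 = (0)"
 "brk s 1 3 1 = (0)"
 "brk s 1 3 2 = (0)"
 "brk s 1 3 3 = (0)"
 "brk s 1 3 4 = (0)"
 "brk s 1 3 5 = (0)"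
 "brk s 1 3 6 = - (1)"
 "brk s 1 3 7 = (0)"
 "brk s 1 4 1 = (0)"
 "brk s 1 4 2 = (0)"
 "brk s 1 4 3 = (0)"
 "brk s 1 4 4 = (0)"
 "brk s 1 4 5 = - (1)"
 "brk s 1 4 6 = (0)"
 "brk s 1 4 7 = (0)"
 "brk s 1 5 1 = (0)"
 "brk s 1 5 2 = (0)"
 "brk s 1 5 3 = (0)"
 "brk s 1 5 4 = (0)"
 "brk s 1 5 5 = (0)"
 "brk s 1 5 6 = (0)"
 "brk s 1 5 7 = (0)"
 "brk s 1 6 1 = (0)"
 "brk s 1 6 2 = (0)"
 "brk s 1 6 3 = (0)"
 "brk s 1 6 4 = (0)"
 "brk s 1 6 5 = (0)"
 "brk s 1 6 6 = (0)"
 "brk s 1 6 7 = (0)"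
 "brk s 1 7 1 = (-3/8) + (-1) * s"
 "brk s 1 7 2 = (0)"
 "brk s 1 7 3 = (0)"
 "brk s 1 7 4 = (0)"
 "brk s 1 7 5 = (0)"
 "brk s 1 7 6 = (0)"
 "brk s 1 7 7 = (0)"
 "brk s 2 1 1 = (0)"
 "brk s 2 1 2 = (0)"
 "brk s 2 1 3 = (0)"
 "brk s 2 1 4 = (0)"
 "brk s 2 1 5 = (0)"
 "brk s 2 1 6 = (0)"
 "brk s 2 1 7 = (0)"
 "brk s 2 2 1 = (0)"
 "brk s 2 2 2 = (0)"
 "brk s 2 2 3 = (0)"
 "brk s 2 2 4 = (0)"
 "brk s 2 2 5 = (0)"
 "brk s 2 2 6 = (0)"
 "brk s 2 2 7 = (0)"
 "brk s 2 3 1 = (0)"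
 "brk s 2 3 2 = (0)"
 "brk s 2 3 3 = (0)"
 "brk s 2 3 4 = (0)"
 "brk s 2 3 5 = - (1)"
 "brk s 2 3 6 = (0)"
 "brk s 2 3 7 = (0)"
 "brk s 2 4 1 = (0)"
 "brk s 2 4 2 = (0)"
 "brk s 2 4 3 = (0)"
 "brk s 2 4 4 = (0)"
 "brk s 2 4 5 = (0)"
 "brk s 2 4 6 = (0)"
 "brk s 2 4 7 = (0)"
 "brk s 2 5 1 = (0)"
 "brk s 2 5 2 = (0)"
 "brk s 2 5 3 = (0)"
 "brk s 2 5 4 = (0)"
 "brk s 2 5 5 = (0)"
 "brk s 2 5 6 = (0)"
 "brk s 2 5 7 = (0)"
 "brk s 2 6 1 = (0)"
 "brk s 2 6 2 = (0)"
 "brk s 2 6 3 = (0)"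
 "brk s 2 6 4 = (0)"
 "brk s 2 6 5 = (0)"
 "brk s 2 6 6 = (0)"
 "brk s 2 6 7 = (0)"
 "brk s 2 7 1 = (0)"
 "brk s 2 7 2 = (1/8) + (-1) * s"
 "brk s 2 7 3 = (0)"
 "brk s 2 7 4 = (0)"
 "brk s 2 7 5 = (0)"
 "brk s 2 7 6 = (0)"
 "brk s 2 7 7 = (0)"
 "brk s 3 1 1 = (0)"
 "brk s 3 1 2 = (0)"
 "brk s 3 1 3 = (0)"
 "brk s 3 1 4 = (0)"
 "brk s 3 1 5 = (0)"
 "brk s 3 1 6 = (1)"
 "brk s 3 1 7 = (0)"
 "brk s 3 2 1 = (0)"
 "brk s 3 2 2 = (0)"
 "brk s 3 2 3 = (0)"
 "brk s 3 2 4 = (0)"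
 "brk s 3 2 5 = (1)"
 "brk s 3 2 6 = (0)"
 "brk s 3 2 7 = (0)"
 "brk s 3 3 1 = (0)"
 "brk s 3 3 2 = (0)"
 "brk s 3 3 3 = (0)"
 "brk s 3 3 4 = (0)"
 "brk s 3 3 5 = (0)"
 "brk s 3 3 6 = (0)"
 "brk s 3 3 7 = (0)"
 "brk s 3 4 1 = (0)"
 "brk s 3 4 2 = (0)"
 "brk s 3 4 3 = (0)"
 "brk s 3 4 4 = (0)"
 "brk s 3 4 5 = (0)"
 "brk s 3 4 6 = (0)"
 "brk s 3 4 7 = (0)"
 "brk s 3 5 1 = (0)"
 "brk s 3 5 2 = (0)"
 "brk s 3 5 3 = (0)"
 "brk s 3 5 4 = (0)"
 "brk s 3 5 5 = (0)"
 "brk s 3 5 6 = (0)"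
 "brk s 3 5 7 = (0)"
 "brk s 3 6 1 = (0)"
 "brk s 3 6 2 = (0)"
 "brk s 3 6 3 = (0)"
 "brk s 3 6 4 = (0)"
 "brk s 3 6 5 = (0)"
 "brk s 3 6 6 = (0)"
 "brk s 3 6 7 = (0)"
 "brk s 3 7 1 = (0)"
 "brk s 3 7 2 = (0)"
 "brk s 3 7 3 = (-3/8) + (1) * s"
 "brk s 3 7 4 = (0)"
 "brk s 3 7 5 = (0)"
 "brk s 3 7 6 = (0)"
 "brk s 3 7 7 = (0)"
 "brk s 4 1 1 = (0)"
 "brk s 4 1 2 = (0)"
 "brk s 4 1 3 = (0)"
 "brk s 4 1 4 = (0)"
 "brk s 4 1 5 = (1)"
 "brk s 4 1 6 = (0)"
 "brk s 4 1 7 = (0)"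
 "brk s 4 2 1 = (0)"
 "brk s 4 2 2 = (0)"
 "brk s 4 2 3 = (0)"
 "brk s 4 2 4 = (0)"
 "brk s 4 2 5 = (0)"
 "brk s 4 2 6 = (0)"
 "brk s 4 2 7 = (0)"
 "brk s 4 3 1 = (0)"
 "brk s 4 3 2 = (0)"
 "brk s 4 3 3 = (0)"
 "brk s 4 3 4 = (0)"
 "brk s 4 3 5 = (0)"
 "brk s 4 3 6 = (0)"
 "brk s 4 3 7 = (0)"
 "brk s 4 4 1 = (0)"
 "brk s 4 4 2 = (0)"
 "brk s 4 4 3 = (0)"
 "brk s 4 4 4 = (0)"
 "brk s 4 4 5 = (0)"
 "brk s 4 4 6 = (0)"
 "brk s 4 4 7 = (0)"
 "brk s 4 5 1 = (0)"
 "brk s 4 5 2 = (0)"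
 "brk s 4 5 3 = (0)"
 "brk s 4 5 4 = (0)"
 "brk s 4 5 5 = (0)"
 "brk s 4 5 6 = (0)"
 "brk s 4 5 7 = (0)"
 "brk s 4 6 1 = (0)"
 "brk s 4 6 2 = (0)"
 "brk s 4 6 3 = (0)"
 "brk s 4 6 4 = (0)"
 "brk s 4 6 5 = (0)"
 "brk s 4 6 6 = (0)"
 "brk s 4 6 7 = (0)"
 "brk s 4 7 1 = (0)"
 "brk s 4 7 2 = (0)"
 "brk s 4 7 3 = (0)"
 "brk s 4 7 4 = (1/8) + (1) * s"
 "brk s 4 7 5 = (0)"
 "brk s 4 7 6 = (0)"
 "brk s 4 7 7 = (0)"
 "brk s 5 1 1 = (0)"
 "brk s 5 1 2 = (0)"
 "brk s 5 1 3 = (0)"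
 "brk s 5 1 4 = (0)"
 "brk s 5 1 5 = (0)"
 "brk s 5 1 6 = (0)"
 "brk s 5 1 7 = (0)"
 "brk s 5 2 1 = (0)"
 "brk s 5 2 2 = (0)"
 "brk s 5 2 3 = (0)"
 "brk s 5 2 4 = (0)"
 "brk s 5 2 5 = (0)"
 "brk s 5 2 6 = (0)"
 "brk s 5 2 7 = (0)"
 "brk s 5 3 1 = (0)"
 "brk s 5 3 2 = (0)"
 "brk s 5 3 3 = (0)"
 "brk s 5 3 4 = (0)"
 "brk s 5 3 5 = (0)"
 "brk s 5 3 6 = (0)"
 "brk s 5 3 7 = (0)"
 "brk s 5 4 1 = (0)"
 "brk s 5 4 2 = (0)"
 "brk s 5 4 3 = (0)"
 "brk s 5 4 4 = (0)"
 "brk s 5 4 5 = (0)"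
 "brk s 5 4 6 = (0)"
 "brk s 5 4 7 = (0)"
 "brk s 5 5 1 = (0)"
 "brk s 5 5 2 = (0)"
 "brk s 5 5 3 = (0)"
 "brk s 5 5 4 = (0)"
 "brk s 5 5 5 = (0)"
 "brk s 5 5 6 = (0)"
 "brk s 5 5 7 = (0)"
 "brk s 5 6 1 = (0)"
 "brk s 5 6 2 = (0)"
 "brk s 5 6 3 = (0)"
 "brk s 5 6 4 = (0)"
 "brk s 5 6 5 = (0)"
 "brk s 5 6 6 = (0)"
 "brk s 5 6 7 = (0)"
 "brk s 5 7 1 = (0)"
 "brk s 5 7 2 = (0)"
 "brk s 5 7 3 = (0)"
 "brk s 5 7 4 = (0)"
 "brk s 5 7 5 = - (1/4)"
 "brk s 5 7 6 = (0)"
 "brk s 5 7 7 = (0)"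
 "brk s 6 1 1 = (0)"
 "brk s 6 1 2 = (0)"
 "brk s 6 1 3 = (0)"
 "brk s 6 1 4 = (0)"
 "brk s 6 1 5 = (0)"
 "brk s 6 1 6 = (0)"
 "brk s 6 1 7 = (0)"
 "brk s 6 2 1 = (0)"
 "brk s 6 2 2 = (0)"
 "brk s 6 2 3 = (0)"
 "brk s 6 2 4 = (0)"
 "brk s 6 2 5 = (0)"
 "brk s 6 2 6 = (0)"
 "brk s 6 2 7 = (0)"
 "brk s 6 3 1 = (0)"
 "brk s 6 3 2 = (0)"
 "brk s 6 3 3 = (0)"
 "brk s 6 3 4 = (0)"
 "brk s 6 3 5 = (0)"
 "brk s 6 3 6 = (0)"
 "brk s 6 3 7 = (0)"
 "brk s 6 4 1 = (0)"
 "brk s 6 4 2 = (0)"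
 "brk s 6 4 3 = (0)"
 "brk s 6 4 4 = (0)"
 "brk s 6 4 5 = (0)"
 "brk s 6 4 6 = (0)"
 "brk s 6 4 7 = (0)"
 "brk s 6 5 1 = (0)"
 "brk s 6 5 2 = (0)"
 "brk s 6 5 3 = (0)"
 "brk s 6 5 4 = (0)"
 "brk s 6 5 5 = (0)"
 "brk s 6 5 6 = (0)"
 "brk s 6 5 7 = (0)"
 "brk s 6 6 1 = (0)"
 "brk s 6 6 2 = (0)"
 "brk s 6 6 3 = (0)"
 "brk s 6 6 4 = (0)"
 "brk s 6 6 5 = (0)"
 "brk s 6 6 6 = (0)"
 "brk s 6 6 7 = (0)"
 "brk s 6 7 1 = (0)"
 "brk s 6 7 2 = (0)"
 "brk s 6 7 3 = (0)"
 "brk s 6 7 4 = (0)"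
 "brk s 6 7 5 = (0)"
 "brk s 6 7 6 = - (3/4)"
 "brk s 6 7 7 = (0)"
 "brk s 7 1 1 = (3/8) + (1) * s"
 "brk s 7 1 2 = (0)"
 "brk s 7 1 3 = (0)"
 "brk s 7 1 4 = (0)"
 "brk s 7 1 5 = (0)"
 "brk s 7 1 6 = (0)"
 "brk s 7 1 7 = (0)"
 "brk s 7 2 1 = (0)"
 "brk s 7 2 2 = (-1/8) + (1) * s"
 "brk s 7 2 3 = (0)"
 "brk s 7 2 4 = (0)"
 "brk s 7 2 5 = (0)"
 "brk s 7 2 6 = (0)"
 "brk s 7 2 7 = (0)"
 "brk s 7 3 1 = (0)"
 "brk s 7 3 2 = (0)"
 "brk s 7 3 3 = (3/8) + (-1) * s"
 "brk s 7 3 4 = (0)"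
 "brk s 7 3 5 = (0)"
 "brk s 7 3 6 = (0)"
 "brk s 7 3 7 = (0)"
 "brk s 7 4 1 = (0)"
 "brk s 7 4 2 = (0)"
 "brk s 7 4 3 = (0)"
 "brk s 7 4 4 = (-1/8) + (-1) * s"
 "brk s 7 4 5 = (0)"
 "brk s 7 4 6 = (0)"
 "brk s 7 4 7 = (0)"
 "brk s 7 5 1 = (0)"
 "brk s 7 5 2 = (0)"
 "brk s 7 5 3 = (0)"
 "brk s 7 5 4 = (0)"
 "brk s 7 5 5 = (1/4)"
 "brk s 7 5 6 = (0)"
 "brk s 7 5 7 = (0)"
 "brk s 7 6 1 = (0)"
 "brk s 7 6 2 = (0)"
 "brk s 7 6 3 = (0)"
 "brk s 7 6 4 = (0)"
 "brk s 7 6 5 = (0)"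
 "brk s 7 6 6 = (3/4)"
 "brk s 7 6 7 = (0)"
 "brk s 7 7 1 = (0)"
 "brk s 7 7 2 = (0)"
 "brk s 7 7 3 = (0)"
 "brk s 7 7 4 = (0)"
 "brk s 7 7 5 = (0)"
 "brk s 7 7 6 = (0)"
 "brk s 7 7 7 = (0)"
 by (simp_all add: brk_def Adiag_def)

lemma connT:
 "conn s 1 1 1 = (0)"
 "conn s 1 1 2 = (0)"
 "conn s 1 1 3 = (0)"
 "conn s 1 1 4 = (0)"
 "conn s 1 1 5 = (0)"
 "conn s 1 1 6 = (0)"
 "conn s 1 1 7 = (3/8) + (1) * s"
 "conn s 1 2 1 = (0)"
 "conn s 1 2 2 = (0)"
 "conn s 1 2 3 = (0)"
 "conn s 1 2 4 = (0)"
 "conn s 1 2 5 = (0)"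
 "conn s 1 2 6 = (0)"
 "conn s 1 2 7 = (0)"
 "conn s 1 3 1 = (0)"
 "conn s 1 3 2 = (0)"
 "conn s 1 3 3 = (0)"
 "conn s 1 3 4 = (0)"
 "conn s 1 3 5 = (0)"
 "conn s 1 3 6 = - (1/2)"
 "conn s 1 3 7 = (0)"
 "conn s 1 4 1 = (0)"
 "conn s 1 4 2 = (0)"
 "conn s 1 4 3 = (0)"
 "conn s 1 4 4 = (0)"
 "conn s 1 4 5 = - (1/2)"
 "conn s 1 4 6 = (0)"
 "conn s 1 4 7 = (0)"
 "conn s 1 5 1 = (0)"
 "conn s 1 5 2 = (0)"
 "conn s 1 5 3 = (0)"
 "conn s 1 5 4 = (1/2)"
 "conn s 1 5 5 = (0)"
 "conn s 1 5 6 = (0)"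
 "conn s 1 5 7 = (0)"
 "conn s 1 6 1 = (0)"
 "conn s 1 6 2 = (0)"
 "conn s 1 6 3 = (1/2)"
 "conn s 1 6 4 = (0)"
 "conn s 1 6 5 = (0)"
 "conn s 1 6 6 = (0)"
 "conn s 1 6 7 = (0)"
 "conn s 1 7 1 = (-3/8) + (-1) * s"
 "conn s 1 7 2 = (0)"
 "conn s 1 7 3 = (0)"
 "conn s 1 7 4 = (0)"
 "conn s 1 7 5 = (0)"
 "conn s 1 7 6 = (0)"
 "conn s 1 7 7 = (0)"
 "conn s 2 1 1 = (0)"
 "conn s 2 1 2 = (0)"
 "conn s 2 1 3 = (0)"
 "conn s 2 1 4 = (0)"
 "conn s 2 1 5 = (0)"
 "conn s 2 1 6 = (0)"
 "conn s 2 1 7 = (0)"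
 "conn s 2 2 1 = (0)"
 "conn s 2 2 2 = (0)"
 "conn s 2 2 3 = (0)"
 "conn s 2 2 4 = (0)"
 "conn s 2 2 5 = (0)"
 "conn s 2 2 6 = (0)"
 "conn s 2 2 7 = (-1/8) + (1) * s"
 "conn s 2 3 1 = (0)"
 "conn s 2 3 2 = (0)"
 "conn s 2 3 3 = (0)"
 "conn s 2 3 4 = (0)"
 "conn s 2 3 5 = - (1/2)"
 "conn s 2 3 6 = (0)"
 "conn s 2 3 7 = (0)"
 "conn s 2 4 1 = (0)"
 "conn s 2 4 2 = (0)"
 "conn s 2 4 3 = (0)"
 "conn s 2 4 4 = (0)"
 "conn s 2 4 5 = (0)"
 "conn s 2 4 6 = (0)"
 "conn s 2 4 7 = (0)"
 "conn s 2 5 1 = (0)"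
 "conn s 2 5 2 = (0)"
 "conn s 2 5 3 = (1/2)"
 "conn s 2 5 4 = (0)"
 "conn s 2 5 5 = (0)"
 "conn s 2 5 6 = (0)"
 "conn s 2 5 7 = (0)"
 "conn s 2 6 1 = (0)"
 "conn s 2 6 2 = (0)"
 "conn s 2 6 3 = (0)"
 "conn s 2 6 4 = (0)"
 "conn s 2 6 5 = (0)"
 "conn s 2 6 6 = (0)"
 "conn s 2 6 7 = (0)"
 "conn s 2 7 1 = (0)"
 "conn s 2 7 2 = (1/8) + (-1) * s"
 "conn s 2 7 3 = (0)"
 "conn s 2 7 4 = (0)"
 "conn s 2 7 5 = (0)"
 "conn s 2 7 6 = (0)"
 "conn s 2 7 7 = (0)"
 "conn s 3 1 1 = (0)"
 "conn s 3 1 2 = (0)"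
 "conn s 3 1 3 = (0)"
 "conn s 3 1 4 = (0)"
 "conn s 3 1 5 = (0)"
 "conn s 3 1 6 = (1/2)"
 "conn s 3 1 7 = (0)"
 "conn s 3 2 1 = (0)"
 "conn s 3 2 2 = (0)"
 "conn s 3 2 3 = (0)"
 "conn s 3 2 4 = (0)"
 "conn s 3 2 5 = (1/2)"
 "conn s 3 2 6 = (0)"
 "conn s 3 2 7 = (0)"
 "conn s 3 3 1 = (0)"
 "conn s 3 3 2 = (0)"
 "conn s 3 3 3 = (0)"
 "conn s 3 3 4 = (0)"
 "conn s 3 3 5 = (0)"
 "conn s 3 3 6 = (0)"
 "conn s 3 3 7 = (3/8) + (-1) * s"
 "conn s 3 4 1 = (0)"
 "conn s 3 4 2 = (0)"
 "conn s 3 4 3 = (0)"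
 "conn s 3 4 4 = (0)"
 "conn s 3 4 5 = (0)"
 "conn s 3 4 6 = (0)"
 "conn s 3 4 7 = (0)"
 "conn s 3 5 1 = (0)"
 "conn s 3 5 2 = - (1/2)"
 "conn s 3 5 3 = (0)"
 "conn s 3 5 4 = (0)"
 "conn s 3 5 5 = (0)"
 "conn s 3 5 6 = (0)"
 "conn s 3 5 7 = (0)"
 "conn s 3 6 1 = - (1/2)"
 "conn s 3 6 2 = (0)"
 "conn s 3 6 3 = (0)"
 "conn s 3 6 4 = (0)"
 "conn s 3 6 5 = (0)"
 "conn s 3 6 6 = (0)"
 "conn s 3 6 7 = (0)"
 "conn s 3 7 1 = (0)"
 "conn s 3 7 2 = (0)"
 "conn s 3 7 3 = (-3/8) + (1) * s"
 "conn s 3 7 4 = (0)"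
 "conn s 3 7 5 = (0)"
 "conn s 3 7 6 = (0)"
 "conn s 3 7 7 = (0)"
 "conn s 4 1 1 = (0)"
 "conn s 4 1 2 = (0)"
 "conn s 4 1 3 = (0)"
 "conn s 4 1 4 = (0)"
 "conn s 4 1 5 = (1/2)"
 "conn s 4 1 6 = (0)"
 "conn s 4 1 7 = (0)"
 "conn s 4 2 1 = (0)"
 "conn s 4 2 2 = (0)"
 "conn s 4 2 3 = (0)"
 "conn s 4 2 4 = (0)"
 "conn s 4 2 5 = (0)"
 "conn s 4 2 6 = (0)"
 "conn s 4 2 7 = (0)"
 "conn s 4 3 1 = (0)"
 "conn s 4 3 2 = (0)"
 "conn s 4 3 3 = (0)"
 "conn s 4 3 4 = (0)"
 "conn s 4 3 5 = (0)"
 "conn s 4 3 6 = (0)"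
 "conn s 4 3 7 = (0)"
 "conn s 4 4 1 = (0)"
 "conn s 4 4 2 = (0)"
 "conn s 4 4 3 = (0)"
 "conn s 4 4 4 = (0)"
 "conn s 4 4 5 = (0)"
 "conn s 4 4 6 = (0)"
 "conn s 4 4 7 = (-1/8) + (-1) * s"
 "conn s 4 5 1 = - (1/2)"
 "conn s 4 5 2 = (0)"
 "conn s 4 5 3 = (0)"
 "conn s 4 5 4 = (0)"
 "conn s 4 5 5 = (0)"
 "conn s 4 5 6 = (0)"
 "conn s 4 5 7 = (0)"
 "conn s 4 6 1 = (0)"
 "conn s 4 6 2 = (0)"
 "conn s 4 6 3 = (0)"
 "conn s 4 6 4 = (0)"
 "conn s 4 6 5 = (0)"
 "conn s 4 6 6 = (0)"
 "conn s 4 6 7 = (0)"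
 "conn s 4 7 1 = (0)"
 "conn s 4 7 2 = (0)"
 "conn s 4 7 3 = (0)"
 "conn s 4 7 4 = (1/8) + (1) * s"
 "conn s 4 7 5 = (0)"
 "conn s 4 7 6 = (0)"
 "conn s 4 7 7 = (0)"
 "conn s 5 1 1 = (0)"
 "conn s 5 1 2 = (0)"
 "conn s 5 1 3 = (0)"
 "conn s 5 1 4 = (1/2)"
 "conn s 5 1 5 = (0)"
 "conn s 5 1 6 = (0)"
 "conn s 5 1 7 = (0)"
 "conn s 5 2 1 = (0)"
 "conn s 5 2 2 = (0)"
 "conn s 5 2 3 = (1/2)"
 "conn s 5 2 4 = (0)"
 "conn s 5 2 5 = (0)"
 "conn s 5 2 6 = (0)"
 "conn s 5 2 7 = (0)"
 "conn s 5 3 1 = (0)"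
 "conn s 5 3 2 = - (1/2)"
 "conn s 5 3 3 = (0)"
 "conn s 5 3 4 = (0)"
 "conn s 5 3 5 = (0)"
 "conn s 5 3 6 = (0)"
 "conn s 5 3 7 = (0)"
 "conn s 5 4 1 = - (1/2)"
 "conn s 5 4 2 = (0)"
 "conn s 5 4 3 = (0)"
 "conn s 5 4 4 = (0)"
 "conn s 5 4 5 = (0)"
 "conn s 5 4 6 = (0)"
 "conn s 5 4 7 = (0)"
 "conn s 5 5 1 = (0)"
 "conn s 5 5 2 = (0)"
 "conn s 5 5 3 = (0)"
 "conn s 5 5 4 = (0)"
 "conn s 5 5 5 = (0)"
 "conn s 5 5 6 = (0)"
 "conn s 5 5 7 = (1/4)"
 "conn s 5 6 1 = (0)"
 "conn s 5 6 2 = (0)"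
 "conn s 5 6 3 = (0)"
 "conn s 5 6 4 = (0)"
 "conn s 5 6 5 = (0)"
 "conn s 5 6 6 = (0)"
 "conn s 5 6 7 = (0)"
 "conn s 5 7 1 = (0)"
 "conn s 5 7 2 = (0)"
 "conn s 5 7 3 = (0)"
 "conn s 5 7 4 = (0)"
 "conn s 5 7 5 = - (1/4)"
 "conn s 5 7 6 = (0)"
 "conn s 5 7 7 = (0)"
 "conn s 6 1 1 = (0)"
 "conn s 6 1 2 = (0)"
 "conn s 6 1 3 = (1/2)"
 "conn s 6 1 4 = (0)"
 "conn s 6 1 5 = (0)"
 "conn s 6 1 6 = (0)"
 "conn s 6 1 7 = (0)"
 "conn s 6 2 1 = (0)"
 "conn s 6 2 2 = (0)"
 "conn s 6 2 3 = (0)"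
 "conn s 6 2 4 = (0)"
 "conn s 6 2 5 = (0)"
 "conn s 6 2 6 = (0)"
 "conn s 6 2 7 = (0)"
 "conn s 6 3 1 = - (1/2)"
 "conn s 6 3 2 = (0)"
 "conn s 6 3 3 = (0)"
 "conn s 6 3 4 = (0)"
 "conn s 6 3 5 = (0)"
 "conn s 6 3 6 = (0)"
 "conn s 6 3 7 = (0)"
 "conn s 6 4 1 = (0)"
 "conn s 6 4 2 = (0)"
 "conn s 6 4 3 = (0)"
 "conn s 6 4 4 = (0)"
 "conn s 6 4 5 = (0)"
 "conn s 6 4 6 = (0)"
 "conn s 6 4 7 = (0)"
 "conn s 6 5 1 = (0)"
 "conn s 6 5 2 = (0)"
 "conn s 6 5 3 = (0)"
 "conn s 6 5 4 = (0)"
 "conn s 6 5 5 = (0)"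
 "conn s 6 5 6 = (0)"
 "conn s 6 5 7 = (0)"
 "conn s 6 6 1 = (0)"
 "conn s 6 6 2 = (0)"
 "conn s 6 6 3 = (0)"
 "conn s 6 6 4 = (0)"
 "conn s 6 6 5 = (0)"
 "conn s 6 6 6 = (0)"
 "conn s 6 6 7 = (3/4)"
 "conn s 6 7 1 = (0)"
 "conn s 6 7 2 = (0)"
 "conn s 6 7 3 = (0)"
 "conn s 6 7 4 = (0)"
 "conn s 6 7 5 = (0)"
 "conn s 6 7 6 = - (3/4)"
 "conn s 6 7 7 = (0)"
 "conn s 7 1 1 = (0)"
 "conn s 7 1 2 = (0)"
 "conn s 7 1 3 = (0)"
 "conn s 7 1 4 = (0)"
 "conn s 7 1 5 = (0)"
 "conn s 7 1 6 = (0)"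
 "conn s 7 1 7 = (0)"
 "conn s 7 2 1 = (0)"
 "conn s 7 2 2 = (0)"
 "conn s 7 2 3 = (0)"
 "conn s 7 2 4 = (0)"
 "conn s 7 2 5 = (0)"
 "conn s 7 2 6 = (0)"
 "conn s 7 2 7 = (0)"
 "conn s 7 3 1 = (0)"
 "conn s 7 3 2 = (0)"
 "conn s 7 3 3 = (0)"
 "conn s 7 3 4 = (0)"
 "conn s 7 3 5 = (0)"
 "conn s 7 3 6 = (0)"
 "conn s 7 3 7 = (0)"
 "conn s 7 4 1 = (0)"
 "conn s 7 4 2 = (0)"
 "conn s 7 4 3 = (0)"
 "conn s 7 4 4 = (0)"
 "conn s 7 4 5 = (0)"
 "conn s 7 4 6 = (0)"
 "conn s 7 4 7 = (0)"
 "conn s 7 5 1 = (0)"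
 "conn s 7 5 2 = (0)"
 "conn s 7 5 3 = (0)"
 "conn s 7 5 4 = (0)"
 "conn s 7 5 5 = (0)"
 "conn s 7 5 6 = (0)"
 "conn s 7 5 7 = (0)"
 "conn s 7 6 1 = (0)"
 "conn s 7 6 2 = (0)"
 "conn s 7 6 3 = (0)"
 "conn s 7 6 4 = (0)"
 "conn s 7 6 5 = (0)"
 "conn s 7 6 6 = (0)"
 "conn s 7 6 7 = (0)"
 "conn s 7 7 1 = (0)"
 "conn s 7 7 2 = (0)"
 "conn s 7 7 3 = (0)"
 "conn s 7 7 4 = (0)"
 "conn s 7 7 5 = (0)"
 "conn s 7 7 6 = (0)"
 "conn s 7 7 7 = (0)"
 by (simp_all only: conn_def brkT; simp)+


lemma sum7: "(\<Sum>k\<in>{1..7::nat}. f k) = f 1 + f 2 + f 3 + f 4 + f 5 + f 6 + f 7"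
  by (simp add: numeral_eq_Suc atLeastAtMostSuc_conv add.commute add.left_commute)

lemma ric_tab:
 "ric s 1 1 = -25/16 - 3/2*s" "ric s 2 2 = -5/16 - 3/2*s" "ric s 3 3 = -25/16 + 3/2*s"
 "ric s 4 4 = -5/16 + 3/2*s" "ric s 5 5 = 5/8" "ric s 6 6 = -5/8" "ric s 7 7 = -15/16 - 4*s^2"
  by (simp_all only: ric_def curv_def sum7 connT brkT; simp add: algebra_simps; simp add: field_simps power2_eq_square)+

lemma ric_off: "ric s 1 2 = 0" "ric s 1 3 = 0" "ric s 1 4 = 0" "ric s 1 5 = 0" "ric s 1 6 = 0" "ric s 1 7 = 0" "ric s 2 1 = 0" "ric s 2 3 = 0" "ric s 2 4 = 0" "ric s 2 5 = 0" "ric s 2 6 = 0" "ric s 2 7 = 0" "ric s 3 1 = 0" "ric s 3 2 = 0" "ric s 3 4 = 0" "ric s 3 5 = 0" "ric s 3 6 = 0" "ric s 3 7 = 0" "ric s 4 1 = 0" "ric s 4 2 = 0" "ric s 4 3 = 0" "ric s 4 5 = 0" "ric s 4 6 = 0" "ric s 4 7 = 0" "ric s 5 1 = 0" "ric s 5 2 = 0" "ric s 5 3 = 0" "ric s 5 4 = 0" "ric s 5 6 = 0" "ric s 5 7 = 0" "ric s 6 1 = 0" "ric s 6 2 = 0" "ric s 6 3 = 0" "ric s 6 4 = 0" "ric s 6 5 = 0" "ric s 6 7 = 0" "ric s 7 1 = 0" "ric s 7 2 = 0" "ric s 7 3 = 0" "ric s 7 4 = 0" "ric s 7 5 = 0"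 "ric s 7 6 = 0"
  by (simp_all only: ric_def curv_def sum7 connT brkT; simp add: algebra_simps; simp add: field_simps)+

lemma scal_eq: "scal s = -(75 + 64*s^2)/16"
  by (simp only: scal_def sum7 ric_tab; simp add: algebra_simps)

lemma p4: "(x::real)^4 = (x^2)^2" by (simp flip: power_mult)

lemma norm_eq: "ric_norm2 s = (1725 + 4224*s^2 + 4096*(s^2)^2)/256"
  by (simp only: ric_norm2_def sum7 ric_tab ric_off; simp add: algebra_simps power2_eq_square)

lemma divcancel: "(a::real) / 256 / (b / 256) = a / b"
  by simp

lemma Fgen: "F s = (75 + 64 * s^2)^2 / (1725 + 4224 * s^2 + 4096 * (s^2)^2)"
proof -
  have e: "(scal s)^2 = (75 + 64*s^2)^2/256"
    unfolding scal_eq by (simp add: power2_eq_square algebra_simps)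
  show ?thesis unfolding F_def e norm_eq divcancel ..
qed

lemma F_eq: "F s = (75 + 64 * s^2)^2 / (1725 + 4224 * s^2 + 4096 * s^4)"
  unfolding p4 by (rule Fgen)

lemma ineq: assumes "(t::real) \<ge> 0"
  shows "(75 + 64 * t)^2 / (1725 + 4224 * t + 4096 * t^2) \<le> 75/23"
proof -
  have t2: "0 \<le> t^2" by simp
  have p: "0 < 1725 + 4224 * t + 4096 * t^2" using assms t2 by linarith
  have e1: "(75 + 64 * t)^2 * 23 = 129375 + 220800 * t + 94208 * t^2"
    by (simp add: power2_eq_square algebra_simps)
  have "(75 + 64 * t)^2 * 23 \<le> 75 * (1725 + 4224 * t + 4096 * t^2)"
  proof -
    have e2: "75 * (1725 + 4224 * t + 4096 * t^2) = 129375 + 316800 * t + 307200 * t^2"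
      by (simp add: algebra_simps)
    show ?thesis unfolding e1 e2 using assms t2 by linarith
  qed
  then show ?thesis using p by (simp add: divide_le_eq)
qed

theorem corollary4p12:
  shows "(\<forall>s::real. s \<ge> 0 \<longrightarrow>
            F s = (75 + 64 * s^2)^2 / (1725 + 4224 * s^2 + 4096 * s^4))
       \<and> (\<forall>s::real. s \<ge> 0 \<longrightarrow> F s \<le> F 0) \<and> F 0 = 75/23 \<and> (75/23::real) > 3
       \<and> F (sqrt 15 / 8) = 135/49
       \<and> F (5/8) = 5/2"
proof -
  have F0: "F 0 = 75/23" unfolding Fgen by simp
  have le: "F s \<le> F 0" for s :: real
    unfolding F0 Fgen[of s] by (rule ineq) simp
  have s15: "(sqrt 15 / 8)^2 = (15/64::real)" by (simp add: power_divide)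
  have a: "F (sqrt 15 / 8) = 135/49" unfolding Fgen s15 by (simp add: power2_eq_square)
  have b: "F (5/8) = 5/2" unfolding Fgen by (simp add: power2_eq_square)
  show ?thesis using le F0 a b F_eq by simp
qed

end
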